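(* Let $a\in\mathbb D$ and $0\le\gamma<2\pi$, and put $a'=|1+a|-1$ and $\gamma_a=\arg(1+\overline a)$. Let $f=h+\overline g\in\mathcal S(H^a_\gamma)$ and assume $g'(0)=a'e^{2i(\gamma+\gamma_a)}$. Then $a'\in(-1,1)$, $|g'(0)|<1$, and for all $z\in\mathbb D$ $$h(z)+e^{-2i(\gamma+\gamma_a)}g(z)=\frac{(1+a')z}{1-e^{i(\gamma+\gamma_a)}z}.$$
   Context: $\mathbb D$ is the open unit disk. A harmonic map $f$ on $\mathbb D$ is written canonically as $f=h+\overline g$ with $h,g$ analytic in $\mathbb D$ and $g(0)=0$. $\mathcal H$ is the set of such $f$ with $h(0)=g(0)=0$ and $h'(0)=1$. $f$ is sense-preserving if $|h'(z)|>|g'(z)|$ on $\mathbb D$. $\mathcal S_H$ is the set of sense-preserving univalent $f\in\mathcal H$. For $a\in\mathbb D$ and $0\le\gamma<2\pi$, $H^a_\gamma=\{w\in\mathbb C:\ \mathrm{Re}\big(\tfrac{e^{i\gamma}}{1+a}w\big)>-\tfrac12\}$ and $\mathcal S(H^a_\gamma)$ denotes the set of $f\in\mathcal S_H$ with $f(\mathbb D)=H^a_\gamma$ (slanted half-plane mappings). Here $\gamma_a=\arg(1+\overline a)$, so $1+a=|1+a|e^{-i\gamma_a}$. *)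

theory Defs
  imports "HOL-Analysis.Analysis"
begin

definition harmonic_f :: "(complex \<Rightarrow> complex) \<Rightarrow> (complex \<Rightarrow> complex) \<Rightarrow> complex \<Rightarrow> complex" where
  "harmonic_f h g = (\<lambda>z. h z + cnj (g z))"

definition in_SH :: "(complex \<Rightarrow> complex) \<Rightarrow> (complex \<Rightarrow> complex) \<Rightarrow> bool" where
  "in_SH h g \<longleftrightarrow>
     h holomorphic_on ball 0 1 \<and> g holomorphic_on ball 0 1 \<and>
     h 0 = 0 \<and> g 0 = 0 \<and> deriv h 0 = 1 \<and>
     (\<forall>z\<in>ball 0 1. norm (deriv g z) < norm (deriv h z)) \<and>
     inj_on (harmonic_f h g) (ball 0 1)"

definition slanted_halfplane :: "complex \<Rightarrow> real \<Rightarrow> complex set" where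
  "slanted_halfplane a \<gamma> = {w. Re (exp (\<i> * complex_of_real \<gamma>) / (1 + a) * w) > - 1 / 2}"

definition in_S_halfplane :: "complex \<Rightarrow> real \<Rightarrow> (complex \<Rightarrow> complex) \<Rightarrow> (complex \<Rightarrow> complex) \<Rightarrow> bool" where
  "in_S_halfplane a \<gamma> h g \<longleftrightarrow> in_SH h g \<and> harmonic_f h g ` ball 0 1 = slanted_halfplane a \<gamma>"

end

theory Submission
  imports Defs "HOL-Complex_Analysis.Complex_Analysis"
begin

theorem proposition1:
  fixes a :: complex and \<gamma> :: real and h g :: "complex \<Rightarrow> complex"
  assumes "a \<in> ball 0 1"
    and "0 \<le> \<gamma>" and "\<gamma> < 2 * pi"
    and "in_S_halfplane a \<gamma> h g"
    and "deriv g 0 = complex_of_real (norm (1 + a) - 1)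
                     * exp (2 * \<i> * complex_of_real (\<gamma> + Arg (1 + cnj a)))"
  shows "norm (1 + a) - 1 \<in> {-1<..<1} \<and>
         norm (deriv g 0) < 1 \<and>
         (\<forall>z\<in>ball 0 1. h z + exp (- 2 * \<i> * complex_of_real (\<gamma> + Arg (1 + cnj a))) * g z
            = complex_of_real (1 + (norm (1 + a) - 1)) * z
              / (1 - exp (\<i> * complex_of_real (\<gamma> + Arg (1 + cnj a))) * z))"
proof -
  define c where "c = norm (1 + a)"
  define t where "t = Arg (1 + cnj a)"
  define \<theta> where "\<theta> = \<gamma> + t"
  define u where "u = exp (\<i> * complex_of_real \<theta>)"
  define v where "v = exp (- 2 * \<i> * complex_of_real \<theta>)"
  have na: "norm a < 1" using assms(1) by simp
  have c_lo: "c > 0"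
  proof -
    have "norm (1::complex) - norm a \<le> norm (1 + a)"
      by (metis norm_diff_ineq)
    thus ?thesis using na unfolding c_def norm_one by linarith
  qed
  have c_hi: "c < 2"
  proof -
    have "norm (1 + a) \<le> norm (1::complex) + norm a" by (rule norm_triangle_ineq)
    thus ?thesis using na unfolding c_def by simp
  qed
  have part1: "norm (1 + a) - 1 \<in> {-1<..<1}" using c_lo c_hi unfolding c_def by simp
  have u_nz: "u \<noteq> 0" unfolding u_def by simp
  have nu: "norm u = 1" unfolding u_def by (simp add: norm_exp)
  have v2: "v * exp (2 * \<i> * complex_of_real \<theta>) = 1"
    unfolding v_def by (simp add: exp_add [symmetric])
  have uv: "u * v = cnj u"
    unfolding u_def v_def by (simp add: exp_cnj exp_add [symmetric] algebra_simps)
  have part2: "norm (deriv g 0) < 1"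
  proof -
    have "norm (deriv g 0) = \<bar>norm (1 + a) - 1\<bar>"
      unfolding assms(5) norm_mult norm_exp_i_times
      by (metis norm_of_real mult.assoc norm_exp_i_times of_real_mult of_real_numeral mult_1_right real_norm_def mult.commute)
    thus ?thesis using c_lo c_hi unfolding c_def by (simp add: abs_less_iff)
  qed
  have polar: "1 + cnj a = complex_of_real c * exp (\<i> * complex_of_real t)"
  proof -
    have e: "1 + cnj a = cnj (1 + a)" by simp
    have m: "cmod (1 + cnj a) = c" unfolding e complex_mod_cnj c_def ..
    have "1 + cnj a = rcis c t" by (metis m rcis_cmod_Arg t_def)
    thus ?thesis by (simp only: rcis_def cis_conv_exp)
  qed
  have polar2: "1 + a = complex_of_real c * exp (- (\<i> * complex_of_real t))"
  proof -
    have "1 + a = cnj (1 + cnj a)" by simp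
    also have "\<dots> = complex_of_real c * exp (- (\<i> * complex_of_real t))"
      unfolding polar by (simp add: exp_cnj)
    finally show ?thesis .
  qed
  have coef: "exp (\<i> * complex_of_real \<gamma>) / (1 + a) = u / complex_of_real c"
    unfolding polar2 u_def \<theta>_def using c_lo
    by (simp add: field_simps exp_minus exp_add [symmetric] algebra_simps)
  from assms(4) have SH: "in_SH h g" and img: "harmonic_f h g ` ball 0 1 = slanted_halfplane a \<gamma>"
    unfolding in_S_halfplane_def by auto
  have holh: "h holomorphic_on ball 0 1" and holg: "g holomorphic_on ball 0 1"
    and h0: "h 0 = 0" and g0: "g 0 = 0" and dh0: "deriv h 0 = 1"
    using SH unfolding in_SH_def by auto
  define F where "F = (\<lambda>z. h z + v * g z)"
  define G where "G = (\<lambda>z. u * F z / complex_of_real c)"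
  have holG: "G holomorphic_on ball 0 1"
    unfolding G_def F_def by (intro holomorphic_intros holh holg) (use c_lo in auto)
  have ReG: "Re (G z) > -1/2" if z: "z \<in> ball 0 1" for z
  proof -
    have "harmonic_f h g z \<in> slanted_halfplane a \<gamma>" using img z by blast
    hence "Re (u / complex_of_real c * (h z + cnj (g z))) > -1/2"
      unfolding slanted_halfplane_def harmonic_f_def coef by simp
    moreover have "Re (u / complex_of_real c * (h z + cnj (g z))) = Re (G z)"
    proof -
      have "Re (u * cnj (g z)) = Re (cnj u * g z)"
        by (metis complex_cnj_cnj complex_cnj_mult cnj.sel(1))
      hence "Re (u * cnj (g z)) = Re (u * v * g z)" by (simp add: uv)
      moreover have "u / complex_of_real c * (h z + cnj (g z)) = (u * h z + u * cnj (g z)) / complex_of_real c"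
        by (simp add: algebra_simps add_divide_distrib)
      moreover have "G z = (u * h z + u * v * g z) / complex_of_real c"
        unfolding G_def F_def by (simp add: algebra_simps add_divide_distrib)
      ultimately show ?thesis by (simp only: Re_divide_of_real plus_complex.sel)
    qed
    ultimately show ?thesis by simp
  qed
  have G0: "G 0 = 0" unfolding G_def F_def using h0 g0 by simp
  have dF: "(F has_field_derivative complex_of_real c) (at 0)"
  proof -
    have "(h has_field_derivative deriv h 0) (at 0)"
      using holomorphic_derivI [OF holh] by simp
    moreover have "(g has_field_derivative deriv g 0) (at 0)"
      using holomorphic_derivI [OF holg] by simp
    ultimately have "(F has_field_derivative deriv h 0 + v * deriv g 0) (at 0)"
      unfolding F_def by (auto intro!: derivative_eq_intros)
    moreover have "deriv h 0 + v * deriv g 0 = complex_of_real c"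
    proof -
      have "v * deriv g 0 = complex_of_real (c - 1) * (v * exp (2 * \<i> * complex_of_real \<theta>))"
        unfolding assms(5) c_def \<theta>_def t_def by (simp add: algebra_simps)
      thus ?thesis using dh0 v2 by simp
    qed
    ultimately show ?thesis by simp
  qed
  have dG: "(G has_field_derivative u) (at 0)"
  proof -
    have "(G has_field_derivative u * complex_of_real c / complex_of_real c) (at 0)"
      unfolding G_def by (auto intro!: derivative_eq_intros dF)
    thus ?thesis using c_lo by simp
  qed
  have G1: "1 + G z \<noteq> 0" if "z \<in> ball 0 1" for z
  proof
    assume "1 + G z = 0"
    hence "G z = -1" by (simp add: add_eq_0_iff)
    thus False using ReG [OF that] by simp
  qed
  define \<omega> where "\<omega> = (\<lambda>z. G z / (1 + G z))"
  have hol\<omega>: "\<omega> holomorphic_on ball 0 1"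
    unfolding \<omega>_def by (intro holomorphic_intros holG) (use G1 in auto)
  have \<omega>0: "\<omega> 0 = 0" unfolding \<omega>_def G0 by simp
  have n\<omega>: "norm (\<omega> z) < 1" if "norm z < 1" for z
  proof -
    have zb: "z \<in> ball 0 1" using that by simp
    have "(norm (G z))^2 < (norm (1 + G z))^2"
    proof -
      have a1: "(norm (G z))^2 = (Re (G z))^2 + (Im (G z))^2" by (simp add: cmod_power2)
      have a2: "(norm (1 + G z))^2 = (1 + Re (G z))^2 + (Im (G z))^2" by (simp add: cmod_power2)
      show ?thesis unfolding a1 a2 using ReG [OF zb] by (simp add: power2_eq_square algebra_simps)
    qed
    hence "norm (G z) < norm (1 + G z)"
      by (meson norm_ge_zero power_less_imp_less_base)
    thus ?thesis unfolding \<omega>_def using G1 [OF zb] by (simp add: norm_divide divide_less_eq)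
  qed
  have d\<omega>: "(\<omega> has_field_derivative u) (at 0)"
  proof -
    have "(\<omega> has_field_derivative (u * (1 + G 0) - G 0 * u) / ((1 + G 0) * (1 + G 0))) (at 0)"
      unfolding \<omega>_def using G1 [of 0] by (auto intro!: derivative_eq_intros dG)
    thus ?thesis using G0 by simp
  qed
  have "deriv \<omega> 0 = u" using d\<omega> by (rule DERIV_imp_deriv)
  then obtain \<alpha> where \<alpha>: "\<And>z. norm z < 1 \<Longrightarrow> \<omega> z = \<alpha> * z"
    using Schwarz_Lemma(3) [OF hol\<omega> \<omega>0 n\<omega>, of 0] nu by auto
  have "((\<lambda>z. \<alpha> * z) has_field_derivative u) (at 0)"
    by (rule has_field_derivative_transform_within_open [OF d\<omega>, of "ball 0 1"]) (auto simp: \<alpha>)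
  moreover have "((\<lambda>z. \<alpha> * z) has_field_derivative \<alpha>) (at 0)"
    by (auto intro!: derivative_eq_intros)
  ultimately have "\<alpha> = u" using DERIV_unique by blast
  have part3: "F z = complex_of_real c * z / (1 - u * z)" if zb: "z \<in> ball 0 1" for z
  proof -
    have nz: "norm z < 1" using zb by simp
    have "\<omega> z = u * z" using \<alpha> [OF nz] \<open>\<alpha> = u\<close> by simp
    hence "G z = u * z * (1 + G z)" unfolding \<omega>_def using G1 [OF zb]
      by (simp add: divide_eq_eq)
    hence e: "G z * (1 - u * z) = u * z" by (simp add: algebra_simps)
    have uz: "1 - u * z \<noteq> 0"
    proof
      assume "1 - u * z = 0"
      hence "norm (u * z) = 1" by (metis eq_iff_diff_eq_0 norm_one)
      thus False using nz nu by (simp add: norm_mult)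
    qed
    have "u * F z / complex_of_real c * (1 - u * z) = u * z" using e unfolding G_def .
    hence "u * (F z * (1 - u * z)) = u * (complex_of_real c * z)"
      using c_lo by (simp add: field_simps)
    hence "F z * (1 - u * z) = complex_of_real c * z" using u_nz by simp
    thus ?thesis using uz by (simp add: eq_divide_eq)
  qed
  show ?thesis
    using part1 part2 part3 unfolding F_def v_def u_def \<theta>_def t_def c_def by simp
qed

end
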